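(* Let $\lambda,\zeta\leq 0$, $f_S(y)=\zeta y$, $f_F(y)=\lambda y$, $\eta>0$, $\tau>0$, $m,s\in\mathbb{N}$ and $y\in\mathbb{R}$. Then one step of the mROCK2 method with macro-step $\tau$, micro-step $\eta$, $m$ micro stages and $s$ macro stages applied to $\dot y=f_F(y)+f_S(y)$ gives $y_{n+1}=R_{s,m}(\lambda,\zeta,\tau,\eta)\,y_n$ with $$R_{s,m}(\lambda,\zeta,\tau,\eta)=R_s\!\left(\tau\,\Phi_m(\eta\lambda)(\lambda+\zeta)\Bigl(1-\frac{\eta\lambda\alpha_m}{2}\Phi_m(\eta\lambda)\Bigr)\right),$$ where $\Phi_m(z)=\frac{P_m(z)-1}{z}$ ($\Phi_m(0)=1$), $\alpha_m=P_m''(0)$, and $R_s$ is the stability polynomial of the $s$-stage ROCK2 scheme.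
   Context: RKC method (micro method). For damping $\varepsilon\geq 0$ and $m$ stages, let $T_j$ be the Chebyshev polynomials ($T_0=1$, $T_1(x)=x$, $T_j=2xT_{j-1}-T_{j-2}$), $\omega_0=1+\varepsilon/m^2$, $\omega_1=T_m(\omega_0)/T_m'(\omega_0)$, $b_j=1/T_j(\omega_0)$. One step of size $h$ for $\dot u=g(u)$ from $u_0$: $k_0=u_0$, $k_1=k_0+\frac{\omega_1}{\omega_0}h\,g(k_0)$, $k_j=\nu_jk_{j-1}+\kappa_jk_{j-2}+\mu_jh\,g(k_{j-1})$ for $j=2,\dots,m$, with $\mu_j=2\omega_1b_j/b_{j-1}$, $\nu_j=2\omega_0b_j/b_{j-1}$, $\kappa_j=-b_j/b_{j-2}$; the result is $k_m$. Its stability polynomial is $P_m(z)=b_mT_m(\omega_0+\omega_1z)$. ROCK2 method (macro method): an explicit $s$-stage Runge–Kutta method; applied to $\dot y=\kappa y$ with step $\tau$ it gives $y_{n+1}=R_s(\tau\kappa)y_n$, $R_s$ being its stability polynomial. mROCK2 step for $\dot y=f_F(y)+f_S(y)$: define $\bar f_{\eta,2}(y)$ by (i) $u_\eta$ = one RKC step of size $\eta$ for $\dot u=f_F(u)+f_S(y)$, $u(0)=y$; (ii) $\bar f_{\eta,1}(y)=(u_\eta-y)/\eta$; (iii) $v_\eta$ = one RKC step of size $\eta$ for $\dot v=f_F\bigl(v-\frac{\alpha_m\eta}{2}\bar f_{\eta,1}(y)\bigr)+f_S(y)$, $v(0)=y$; (iv) $\bar f_{\eta,2}(y)=(v_\eta-y)/\eta$.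 Then $y_{n+1}$ is one ROCK2 step of size $\tau$ from $y_n$ for $\dot y=\bar f_{\eta,2}(y)$. *)

theory Defs
  imports "HOL-Analysis.Analysis"
begin

fun cheb :: "nat \<Rightarrow> real \<Rightarrow> real" where
  "cheb 0 x = 1"
| "cheb (Suc 0) x = x"
| "cheb (Suc (Suc j)) x = 2 * x * cheb (Suc j) x - cheb j x"

definition rkc_w0 :: "real \<Rightarrow> nat \<Rightarrow> real" where
  "rkc_w0 eps m = 1 + eps / (real m)^2"

definition rkc_w1 :: "real \<Rightarrow> nat \<Rightarrow> real" where
  "rkc_w1 eps m = cheb m (rkc_w0 eps m) / deriv (cheb m) (rkc_w0 eps m)"

definition rkc_b :: "real \<Rightarrow> nat \<Rightarrow> nat \<Rightarrow> real" where
  "rkc_b eps m j = 1 / cheb j (rkc_w0 eps m)"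

definition rkc_mu :: "real \<Rightarrow> nat \<Rightarrow> nat \<Rightarrow> real" where
  "rkc_mu eps m j = 2 * rkc_w1 eps m * rkc_b eps m j / rkc_b eps m (j - 1)"

definition rkc_nu :: "real \<Rightarrow> nat \<Rightarrow> nat \<Rightarrow> real" where
  "rkc_nu eps m j = 2 * rkc_w0 eps m * rkc_b eps m j / rkc_b eps m (j - 1)"

definition rkc_kappa :: "real \<Rightarrow> nat \<Rightarrow> nat \<Rightarrow> real" where
  "rkc_kappa eps m j = - rkc_b eps m j / rkc_b eps m (j - 2)"

fun rkc_k :: "real \<Rightarrow> nat \<Rightarrow> (real \<Rightarrow> real) \<Rightarrow> real \<Rightarrow> real \<Rightarrow> nat \<Rightarrow> real" where
  "rkc_k eps m g h u0 0 = u0"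
| "rkc_k eps m g h u0 (Suc 0) = u0 + rkc_w1 eps m / rkc_w0 eps m * h * g u0"
| "rkc_k eps m g h u0 (Suc (Suc j)) =
     rkc_nu eps m (j + 2) * rkc_k eps m g h u0 (Suc j)
   + rkc_kappa eps m (j + 2) * rkc_k eps m g h u0 j
   + rkc_mu eps m (j + 2) * h * g (rkc_k eps m g h u0 (Suc j))"

definition rkc_step :: "real \<Rightarrow> nat \<Rightarrow> (real \<Rightarrow> real) \<Rightarrow> real \<Rightarrow> real \<Rightarrow> real" where
  "rkc_step eps m g h u0 = rkc_k eps m g h u0 m"

definition rkc_P :: "real \<Rightarrow> nat \<Rightarrow> real \<Rightarrow> real" where
  "rkc_P eps m z = rkc_b eps m m * cheb m (rkc_w0 eps m + rkc_w1 eps m * z)"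

definition rkc_alpha :: "real \<Rightarrow> nat \<Rightarrow> real" where
  "rkc_alpha eps m = deriv (deriv (rkc_P eps m)) 0"

definition rkc_Phi :: "real \<Rightarrow> nat \<Rightarrow> real \<Rightarrow> real" where
  "rkc_Phi eps m z = (if z = 0 then 1 else (rkc_P eps m z - 1) / z)"

text \<open>Butcher tableau: coefficients A i j (used for j < i < s) and weights B i (i < s).
  Stage values K_0,...,K_{i-1} for the autonomous problem y' = f y.\<close>
fun erk_stages :: "(nat \<Rightarrow> nat \<Rightarrow> real) \<Rightarrow> (real \<Rightarrow> real) \<Rightarrow> real \<Rightarrow> real \<Rightarrow> nat \<Rightarrow> real list" where
  "erk_stages A f tau y 0 = []"
| "erk_stages A f tau y (Suc i) =
     (let ks = erk_stages A f tau y i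
      in ks @ [y + tau * (\<Sum>j<i. A i j * f (ks ! j))])"

definition erk_step :: "(nat \<Rightarrow> nat \<Rightarrow> real) \<Rightarrow> (nat \<Rightarrow> real) \<Rightarrow> nat \<Rightarrow> (real \<Rightarrow> real) \<Rightarrow> real \<Rightarrow> real \<Rightarrow> real" where
  "erk_step A B s f tau y =
     (let ks = erk_stages A f tau y s in y + tau * (\<Sum>i<s. B i * f (ks ! i)))"

text \<open>Stability polynomial R_s: applied to y' = kappa y with step tau the method gives
  y_1 = R_s(tau kappa) y_0; equivalently R_s(z) = one step of size 1 for y' = z y from 1.\<close>
definition erk_stab :: "(nat \<Rightarrow> nat \<Rightarrow> real) \<Rightarrow> (nat \<Rightarrow> real) \<Rightarrow> nat \<Rightarrow> real \<Rightarrow> real" where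
  "erk_stab A B s z = erk_step A B s (\<lambda>u. z * u) 1 1"

definition mrock_fbar1 :: "real \<Rightarrow> nat \<Rightarrow> (real \<Rightarrow> real) \<Rightarrow> (real \<Rightarrow> real) \<Rightarrow> real \<Rightarrow> real \<Rightarrow> real" where
  "mrock_fbar1 eps m fF fS eta y = (rkc_step eps m (\<lambda>u. fF u + fS y) eta y - y) / eta"

definition mrock_fbar2 :: "real \<Rightarrow> nat \<Rightarrow> (real \<Rightarrow> real) \<Rightarrow> (real \<Rightarrow> real) \<Rightarrow> real \<Rightarrow> real \<Rightarrow> real" where
  "mrock_fbar2 eps m fF fS eta y =
     (rkc_step eps m
        (\<lambda>v. fF (v - rkc_alpha eps m * eta / 2 * mrock_fbar1 eps m fF fS eta y) + fS y)
        eta y - y) / eta"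

definition mrock2_step ::
  "real \<Rightarrow> nat \<Rightarrow> (nat \<Rightarrow> nat \<Rightarrow> real) \<Rightarrow> (nat \<Rightarrow> real) \<Rightarrow> nat \<Rightarrow>
   (real \<Rightarrow> real) \<Rightarrow> (real \<Rightarrow> real) \<Rightarrow> real \<Rightarrow> real \<Rightarrow> real \<Rightarrow> real" where
  "mrock2_step eps m A B s fF fS tau eta y = erk_step A B s (mrock_fbar2 eps m fF fS eta) tau y"

end

theory Submission
  imports Defs
begin

fun chebd :: "nat \<Rightarrow> real \<Rightarrow> real" where
  "chebd 0 x = 0"
| "chebd (Suc 0) x = 1"
| "chebd (Suc (Suc j)) x = 2 * cheb (Suc j) x + 2 * x * chebd (Suc j) x - chebd j x"

lemma cheb_deriv: "(cheb j has_real_derivative chebd j x) (at x)"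
proof (induction j x rule: cheb.induct)
  case (1 x) then show ?case by (auto intro!: derivative_eq_intros)
next
  case (2 x) then show ?case by (auto intro!: derivative_eq_intros)
next
  case (3 j x')
  have e: "cheb (Suc (Suc j)) = (\<lambda>x. 2 * x * cheb (Suc j) x - cheb j x)" by (rule ext) simp
  show ?case unfolding e using 3
    by (auto intro!: derivative_eq_intros simp: algebra_simps)
qed

lemma deriv_cheb: "deriv (cheb j) x = chebd j x"
  using cheb_deriv DERIV_imp_deriv by blast

lemma cheb_ge: "x \<ge> 1 \<Longrightarrow> 1 \<le> cheb j x \<and> cheb j x \<le> cheb (Suc j) x"
proof (induction j)
  case 0 then show ?case by simp
next
  case (Suc j)
  then have "2 * x * cheb (Suc j) x \<ge> 2 * cheb (Suc j) x"
    by (simp add: mult_right_mono)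
  moreover have "cheb (Suc (Suc j)) x = 2 * x * cheb (Suc j) x - cheb j x" by simp
  ultimately show ?case using Suc by linarith
qed

lemma chebd_ge: "x \<ge> 1 \<Longrightarrow> 0 \<le> chebd j x \<and> chebd j x \<le> chebd (Suc j) x \<and> 1 \<le> chebd (Suc j) x"
proof (induction j)
  case 0 then show ?case by simp
next
  case (Suc j)
  then have "2 * x * chebd (Suc j) x \<ge> 2 * chebd (Suc j) x"
    by (simp add: mult_right_mono)
  moreover have "cheb (Suc j) x \<ge> 1" using cheb_ge Suc by blast
  moreover have "chebd (Suc (Suc j)) x = 2 * cheb (Suc j) x + 2 * x * chebd (Suc j) x - chebd j x" by simp
  ultimately show ?case using Suc by linarith
qed

lemma w0_ge: "eps \<ge> 0 \<Longrightarrow> rkc_w0 eps m \<ge> 1"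
  unfolding rkc_w0_def by simp

lemma coefs:
  assumes "eps \<ge> 0"
  shows "rkc_nu eps m (j+2) = 2 * rkc_w0 eps m * cheb (Suc j) (rkc_w0 eps m) / cheb (Suc (Suc j)) (rkc_w0 eps m)"
    "rkc_kappa eps m (j+2) = - cheb j (rkc_w0 eps m) / cheb (Suc (Suc j)) (rkc_w0 eps m)"
    "rkc_mu eps m (j+2) = 2 * rkc_w1 eps m * cheb (Suc j) (rkc_w0 eps m) / cheb (Suc (Suc j)) (rkc_w0 eps m)"
proof -
  let ?w = "rkc_w0 eps m"
  have a: "cheb j ?w \<ge> 1" "cheb (Suc j) ?w \<ge> 1" "cheb (Suc (Suc j)) ?w \<ge> 1"
    using cheb_ge w0_ge[OF assms] by blast+
  have e: "j + 2 = Suc (Suc j)" "Suc (Suc j) - 1 = Suc j" "Suc (Suc j) - 2 = j" by simp_all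
  show "rkc_nu eps m (j+2) = 2 * rkc_w0 eps m * cheb (Suc j) (rkc_w0 eps m) / cheb (Suc (Suc j)) (rkc_w0 eps m)"
    unfolding rkc_nu_def rkc_b_def e using a by (simp del: cheb.simps add: field_simps)
  show "rkc_kappa eps m (j+2) = - cheb j (rkc_w0 eps m) / cheb (Suc (Suc j)) (rkc_w0 eps m)"
    unfolding rkc_kappa_def rkc_b_def e using a by (simp del: cheb.simps add: field_simps)
  show "rkc_mu eps m (j+2) = 2 * rkc_w1 eps m * cheb (Suc j) (rkc_w0 eps m) / cheb (Suc (Suc j)) (rkc_w0 eps m)"
    unfolding rkc_mu_def rkc_b_def e using a by (simp del: cheb.simps add: field_simps)
qed

lemma nu_kappa: "eps \<ge> 0 \<Longrightarrow> rkc_nu eps m (j+2) + rkc_kappa eps m (j+2) = 1"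
proof -
  assume e: "eps \<ge> 0"
  let ?w = "rkc_w0 eps m"
  have a: "cheb j ?w \<ge> 1" "cheb (Suc j) ?w \<ge> 1" "cheb (Suc (Suc j)) ?w \<ge> 1"
    using cheb_ge w0_ge[OF e] by blast+
  have T: "cheb (Suc (Suc j)) ?w = 2 * ?w * cheb (Suc j) ?w - cheb j ?w" by simp
  show ?thesis
    unfolding coefs[OF e] using a
    by (simp del: cheb.simps add: divide_simps) (simp add: T)
qed

definition qq :: "real \<Rightarrow> nat \<Rightarrow> real \<Rightarrow> nat \<Rightarrow> real" where
  "qq eps m z j = rkc_k eps m (\<lambda>u. z * u + 1) 1 0 j"

lemma rkc_affine:
  assumes "eps \<ge> 0"
  shows "rkc_k eps m (\<lambda>u. lam * u + c) h u0 j
     = u0 + h * (lam * u0 + c) * qq eps m (h * lam) j"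
proof (induction j rule: nat_less_induct)
  case (1 n)
  show ?case
  proof (cases n)
    case 0 then show ?thesis by (simp add: qq_def)
  next
    case (Suc n')
    show ?thesis
    proof (cases n')
      case 0 then show ?thesis using Suc w0_ge[OF assms] by (simp add: qq_def field_simps)
    next
      case (Suc j)
      have IH1: "rkc_k eps m (\<lambda>u. lam * u + c) h u0 (Suc j) = u0 + h * (lam * u0 + c) * qq eps m (h * lam) (Suc j)"
        using 1 Suc \<open>n = Suc n'\<close> by auto
      have IH0: "rkc_k eps m (\<lambda>u. lam * u + c) h u0 j = u0 + h * (lam * u0 + c) * qq eps m (h * lam) j"
        using 1 Suc \<open>n = Suc n'\<close> by auto
      have nk: "rkc_nu eps m (Suc (Suc j)) = 1 - rkc_kappa eps m (Suc (Suc j))"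
        using nu_kappa[OF assms, of m j] by simp
      show ?thesis unfolding \<open>n = Suc n'\<close> Suc
        apply (simp only: rkc_k.simps IH1 IH0)
        apply (simp add: qq_def nk)
        apply (simp add: algebra_simps)
        done
    qed
  qed
qed

definition pp :: "real \<Rightarrow> nat \<Rightarrow> real \<Rightarrow> nat \<Rightarrow> real" where
  "pp eps m z j = rkc_b eps m j * cheb j (rkc_w0 eps m + rkc_w1 eps m * z)"

lemma qq_p:
  assumes "eps \<ge> 0"
  shows "z * qq eps m z j = pp eps m z j - 1"
proof (induction j rule: nat_less_induct)
  case (1 n)
  let ?w = "rkc_w0 eps m"
  have w: "?w \<ge> 1" using w0_ge[OF assms] .
  show ?case
  proof (cases n)
    case 0 then show ?thesis by (simp add: qq_def pp_def rkc_b_def)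
  next
    case (Suc n')
    show ?thesis
    proof (cases n')
      case 0 then show ?thesis using Suc w by (simp add: qq_def pp_def rkc_b_def field_simps)
    next
      case (Suc j)
      have IH1: "z * qq eps m z (Suc j) = pp eps m z (Suc j) - 1"
        using 1 Suc \<open>n = Suc n'\<close> by auto
      have IH0: "z * qq eps m z j = pp eps m z j - 1"
        using 1 Suc \<open>n = Suc n'\<close> by auto
      have a: "cheb j ?w \<ge> 1" "cheb (Suc j) ?w \<ge> 1" "cheb (Suc (Suc j)) ?w \<ge> 1"
        using cheb_ge w by blast+
      have nk: "rkc_nu eps m (j+2) + rkc_kappa eps m (j+2) = 1"
        using nu_kappa[OF assms] by blast
      have rec: "qq eps m z (Suc (Suc j)) = rkc_nu eps m (j+2) * qq eps m z (Suc j)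
          + rkc_kappa eps m (j+2) * qq eps m z j + rkc_mu eps m (j+2) * (z * qq eps m z (Suc j) + 1)"
        by (simp add: qq_def)
      have "z * qq eps m z (Suc (Suc j)) = rkc_nu eps m (j+2) * (z * qq eps m z (Suc j))
          + rkc_kappa eps m (j+2) * (z * qq eps m z j) + rkc_mu eps m (j+2) * z * (z * qq eps m z (Suc j) + 1)"
        unfolding rec by (simp add: algebra_simps)
      also have "\<dots> = rkc_nu eps m (j+2) * pp eps m z (Suc j) + rkc_kappa eps m (j+2) * pp eps m z j
          + rkc_mu eps m (j+2) * z * pp eps m z (Suc j) - (rkc_nu eps m (j+2) + rkc_kappa eps m (j+2))"
        unfolding IH1 IH0 by (simp add: algebra_simps)
      also have "\<dots> = pp eps m z (Suc (Suc j)) - 1"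
      proof -
        let ?x = "rkc_w0 eps m + rkc_w1 eps m * z"
        have C: "cheb (Suc (Suc j)) ?x = 2 * ?x * cheb (Suc j) ?x - cheb j ?x" by simp
        have Tw: "cheb (Suc (Suc j)) (rkc_w0 eps m) = 2 * rkc_w0 eps m * cheb (Suc j) (rkc_w0 eps m) - cheb j (rkc_w0 eps m)" by simp
        have "rkc_nu eps m (j+2) * pp eps m z (Suc j) + rkc_kappa eps m (j+2) * pp eps m z j
          + rkc_mu eps m (j+2) * z * pp eps m z (Suc j) = pp eps m z (Suc (Suc j))"
          unfolding coefs[OF assms] pp_def rkc_b_def C using a
          by (simp del: cheb.simps add: field_simps)
        then show ?thesis using nk by linarith
      qed
      finally show ?thesis unfolding \<open>n = Suc n'\<close> Suc .
    qed
  qed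
qed

lemma qq_0:
  assumes "eps \<ge> 0"
  shows "qq eps m 0 j = rkc_w1 eps m * rkc_b eps m j * chebd j (rkc_w0 eps m)"
proof (induction j rule: nat_less_induct)
  case (1 n)
  let ?w = "rkc_w0 eps m"
  have w: "?w \<ge> 1" using w0_ge[OF assms] .
  show ?case
  proof (cases n)
    case 0 then show ?thesis by (simp add: qq_def)
  next
    case (Suc n')
    show ?thesis
    proof (cases n')
      case 0 then show ?thesis using Suc w by (simp add: qq_def rkc_b_def field_simps)
    next
      case (Suc j)
      have IH1: "qq eps m 0 (Suc j) = rkc_w1 eps m * rkc_b eps m (Suc j) * chebd (Suc j) ?w"
        using 1 Suc \<open>n = Suc n'\<close> by auto
      have IH0: "qq eps m 0 j = rkc_w1 eps m * rkc_b eps m j * chebd j ?w"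
        using 1 Suc \<open>n = Suc n'\<close> by auto
      have a: "cheb j ?w \<ge> 1" "cheb (Suc j) ?w \<ge> 1" "cheb (Suc (Suc j)) ?w \<ge> 1"
        using cheb_ge w by blast+
      have rec: "qq eps m 0 (Suc (Suc j)) = rkc_nu eps m (j+2) * qq eps m 0 (Suc j)
          + rkc_kappa eps m (j+2) * qq eps m 0 j + rkc_mu eps m (j+2)"
        by (simp add: qq_def)
      have D: "chebd (Suc (Suc j)) ?w = 2 * cheb (Suc j) ?w + 2 * ?w * chebd (Suc j) ?w - chebd j ?w" by simp
      show ?thesis unfolding \<open>n = Suc n'\<close> Suc rec IH1 IH0 coefs[OF assms] rkc_b_def using a
        by (simp del: cheb.simps chebd.simps add: D field_simps)
    qed
  qed
qed

lemma qq_Phi: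
  assumes "eps \<ge> 0" "m \<ge> 1"
  shows "qq eps m z m = rkc_Phi eps m z"
proof (cases "z = 0")
  case True
  let ?w = "rkc_w0 eps m"
  have w: "?w \<ge> 1" using w0_ge[OF assms(1)] .
  have c: "cheb m ?w \<ge> 1" using cheb_ge w by blast
  obtain k where k: "m = Suc k" using assms(2) by (cases m) auto
  have d: "chebd m ?w \<ge> 1" using chebd_ge[OF w, of k] k by simp
  show ?thesis using True c d
    by (simp add: qq_0[OF assms(1)] rkc_Phi_def rkc_w1_def deriv_cheb rkc_b_def)
next
  case False
  then show ?thesis using qq_p[OF assms(1), of z m]
    by (simp add: rkc_Phi_def rkc_P_def pp_def field_simps)
qed

lemma rkc_step_affine:
  assumes "eps \<ge> 0" "m \<ge> 1"
  shows "rkc_step eps m (\<lambda>u. lam * u + c) h u0 = u0 + h * (lam * u0 + c) * rkc_Phi eps m (h * lam)"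
  unfolding rkc_step_def rkc_affine[OF assms(1)] qq_Phi[OF assms] ..

lemma erk_stages_lin:
  "length (erk_stages A f tau y i) = i"
  by (induction i) (simp_all add: Let_def)

lemma erk_stages_scale:
  "erk_stages A (\<lambda>u. K * u) tau y i = map (\<lambda>v. y * v) (erk_stages A (\<lambda>u. (tau * K) * u) 1 1 i)"
proof (induction i)
  case 0 then show ?case by simp
next
  case (Suc i)
  have L: "length (erk_stages A (\<lambda>u. (tau * K) * u) 1 1 i) = i" by (rule erk_stages_lin)
  have "(\<Sum>j<i. A i j * (K * (erk_stages A (\<lambda>u. K * u) tau y i ! j)))
      = (\<Sum>j<i. A i j * (K * (y * (erk_stages A (\<lambda>u. (tau * K) * u) 1 1 i ! j))))"
    by (rule sum.cong) (simp_all add: Suc L)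
  then have "y + tau * (\<Sum>j<i. A i j * (K * (erk_stages A (\<lambda>u. K * u) tau y i ! j)))
     = y * (1 + (\<Sum>j<i. A i j * (tau * K * (erk_stages A (\<lambda>u. (tau * K) * u) 1 1 i ! j))))"
    by (simp add: sum_distrib_left algebra_simps)
  then show ?case by (simp add: Let_def Suc)
qed

lemma sum_swap_aux:
  "(tau::real) * (\<Sum>i<s. B i * (K * (y * (ks ! i)))) = y * (\<Sum>i<s. B i * (tau * K * (ks ! i)))"
  unfolding sum_distrib_left by (rule sum.cong) (simp_all add: ac_simps)

lemma erk_step_lin:
  "erk_step A B s (\<lambda>u. K * u) tau y = erk_stab A B s (tau * K) * y"
proof -
  let ?ks = "erk_stages A (\<lambda>u. (tau * K) * u) 1 1 s"
  have L: "length ?ks = s" by (rule erk_stages_lin)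
  have S: "(\<Sum>i<s. B i * (K * (erk_stages A (\<lambda>u. K * u) tau y s ! i)))
      = (\<Sum>i<s. B i * (K * (y * (?ks ! i))))"
    unfolding erk_stages_scale[of A K tau y s] by (rule sum.cong) (simp_all add: L)
  have E1: "erk_step A B s (\<lambda>u. K * u) tau y = y + tau * (\<Sum>i<s. B i * (K * (erk_stages A (\<lambda>u. K * u) tau y s ! i)))"
    unfolding erk_step_def Let_def by simp
  have E2: "erk_stab A B s (tau * K) = 1 + (\<Sum>i<s. B i * (tau * K * (?ks ! i)))"
    unfolding erk_stab_def erk_step_def Let_def by simp
  show ?thesis
    unfolding E1 E2 S sum_swap_aux by (simp add: algebra_simps)
qed

theorem lemma4p4:
  fixes lam zeta eps eta tau y :: real
    and m s :: nat
    and A :: "nat \<Rightarrow> nat \<Rightarrow> real" and B :: "nat \<Rightarrow> real"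
  assumes "lam \<le> 0" and "zeta \<le> 0" and "eta > 0" and "tau > 0"
    and "eps \<ge> 0" and "m \<ge> 1"
  shows "mrock2_step eps m A B s (\<lambda>u. lam * u) (\<lambda>u. zeta * u) tau eta y =
    erk_stab A B s
      (tau * rkc_Phi eps m (eta * lam) * (lam + zeta)
         * (1 - eta * lam * rkc_alpha eps m / 2 * rkc_Phi eps m (eta * lam))) * y"
proof -
  let ?P = "rkc_Phi eps m (eta * lam)"
  let ?al = "rkc_alpha eps m"
  have F1: "mrock_fbar1 eps m (\<lambda>u. lam * u) (\<lambda>u. zeta * u) eta x = ?P * (lam + zeta) * x" for x
    unfolding mrock_fbar1_def rkc_step_affine[OF assms(5,6)] using assms(3)
    by (simp add: field_simps)
  have F2: "mrock_fbar2 eps m (\<lambda>u. lam * u) (\<lambda>u. zeta * u) eta x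
      = (?P * (lam + zeta) * (1 - eta * lam * ?al / 2 * ?P)) * x" for x
  proof -
    have g: "(\<lambda>v. lam * (v - ?al * eta / 2 * mrock_fbar1 eps m (\<lambda>u. lam * u) (\<lambda>u. zeta * u) eta x) + zeta * x)
        = (\<lambda>v. lam * v + (zeta * x - lam * ?al * eta / 2 * (?P * (lam + zeta) * x)))"
      unfolding F1 by (rule ext) (simp add: algebra_simps)
    show ?thesis
      unfolding mrock_fbar2_def g rkc_step_affine[OF assms(5,6)] using assms(3)
      by (simp add: field_simps)
  qed
  have e: "mrock_fbar2 eps m (\<lambda>u. lam * u) (\<lambda>u. zeta * u) eta
      = (\<lambda>x. (?P * (lam + zeta) * (1 - eta * lam * ?al / 2 * ?P)) * x)"
    by (rule ext) (rule F2)
  show ?thesis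
    unfolding mrock2_step_def e erk_step_lin by (simp add: mult.assoc)
qed

end
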